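(* Let $a\in\mathbb N$, $N\in\mathbb N$, and let $(n_p)_{1\le p\le N}$ and $(k_p)_{1\le p\le N}$ be strictly increasing sequences in $\mathbb N$ such that, with $n_0:=0$, $k_0:=0$, $n_{N+1}:=n_N+1$, $k_{N+1}:=k_N$, $$\frac{k_p-k_{p-1}}{n_p-n_{p-1}}-\frac{k_{p+1}-k_p}{n_{p+1}-n_p}>0\qquad\forall\,1\le p\le N.$$ Define $\gamma=(\gamma_n)_{n\ge1}$ by $\gamma_n:=0$ for $n\notin\{n_1,\dots,n_N\}$ and $$\gamma_{n_p}:=\frac1a\Big(\frac{k_p-k_{p-1}}{n_p-n_{p-1}}-\frac{k_{p+1}-k_p}{n_{p+1}-n_p}\Big),\qquad 1\le p\le N.$$ Then for all $1\le p\le N$, $\check\omega_{n_p}(\gamma)=k_p/a$ and $\omega_{n_p}(\gamma)=n_p^2-2\check\omega_{n_p}(\gamma)\in\frac1a\mathbb Z$. Consequently every $u_0\in\mathrm{Iso}_\gamma:=\{u\in L^2_{r,0}:\gamma_n(u)=\gamma_n\ \forall n\ge1\}$ is a finite gap potential, the solution $t\mapsto\mathcal S(t)u_0$ of the BO equation is periodic in time with period $T=2\pi a$, and $\mathrm{Iso}_\gamma$ is entirely filled with $T$-periodic solutions.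
   Context: For real $\gamma=(\gamma_n)_{n\ge1}$ with $\sum n|\gamma_n|<\infty$: $\check\omega_n(\gamma):=\sum_{k\ge1}k\gamma_k-\sum_{k>n}(k-n)\gamma_k$ and $\omega_n(\gamma):=n^2-2\check\omega_n(\gamma)$. $\mathbb T=\mathbb R/2\pi\mathbb Z$; $H^s_{r,0}$ is the real Sobolev space of zero-mean real-valued distributions on $\mathbb T$, $L^2_{r,0}=H^0_{r,0}$. BO equation: $\partial_tu=H\partial_x^2u-\partial_x(u^2)$, $H$ the Hilbert transform (multiplier $-i\,\mathrm{sign}(n)$). $h^\sigma_+$: complex sequences with $\sum n^{2\sigma}|z_n|^2<\infty$. Known facts taken as given: for $s>-1/2$ BO is globally well posed in $H^s_{r,0}$ with solution map $\mathcal S(t)$; there is $\Phi:u\mapsto(\zeta_n(u))_{n\ge1}$, a homeomorphism $H^s_{r,0}\to h^{s+1/2}_+$ for each $s>-1/2$, with $\zeta_n(\mathcal S(t)u)=e^{i\omega_nt}\zeta_n(u)$, $\omega_n=\omega_n(\gamma(u))$, where $\gamma_n(u):=|\zeta_n(u)|^2$ (the actions). A finite gap potential is a $u$ with $\zeta_n(u)=0$ for all sufficiently large $n$. *)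

theory Defs
  imports "HOL-Analysis.Analysis"
begin

(* check-omega_n(gamma) = sum_{k>=1} k gamma_k - sum_{k>n} (k-n) gamma_k *)
definition omega_check :: "(nat \<Rightarrow> real) \<Rightarrow> nat \<Rightarrow> real" where
  "omega_check \<gamma> n =
     (\<Sum>j. real (Suc j) * \<gamma> (Suc j)) - (\<Sum>j. real (Suc j) * \<gamma> (n + Suc j))"

definition omega :: "(nat \<Rightarrow> real) \<Rightarrow> nat \<Rightarrow> real" where
  "omega \<gamma> n = real n ^ 2 - 2 * omega_check \<gamma> n"

definition ext_seq :: "nat \<Rightarrow> (nat \<Rightarrow> nat) \<Rightarrow> nat \<Rightarrow> nat \<Rightarrow> nat" where
  "ext_seq N s d p = (if p = 0 then 0 else if p \<le> N then s p else s N + d)"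

definition nn :: "nat \<Rightarrow> (nat \<Rightarrow> nat) \<Rightarrow> nat \<Rightarrow> nat" where
  "nn N n = ext_seq N n 1"
definition kk :: "nat \<Rightarrow> (nat \<Rightarrow> nat) \<Rightarrow> nat \<Rightarrow> nat" where
  "kk N k = ext_seq N k 0"

definition slope_gap :: "nat \<Rightarrow> (nat \<Rightarrow> nat) \<Rightarrow> (nat \<Rightarrow> nat) \<Rightarrow> nat \<Rightarrow> real" where
  "slope_gap N n k p =
     (real (kk N k p) - real (kk N k (p - 1))) / (real (nn N n p) - real (nn N n (p - 1)))
   - (real (kk N k (p + 1)) - real (kk N k p)) / (real (nn N n (p + 1)) - real (nn N n p))"

definition gamma_seq :: "nat \<Rightarrow> nat \<Rightarrow> (nat \<Rightarrow> nat) \<Rightarrow> (nat \<Rightarrow> nat) \<Rightarrow> nat \<Rightarrow> real" where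
  "gamma_seq a N n k m =
     (if \<exists>p\<in>{1..N}. n p = m
      then slope_gap N n k (THE p. p \<in> {1..N} \<and> n p = m) / real a
      else 0)"

definition actions :: "('u \<Rightarrow> nat \<Rightarrow> complex) \<Rightarrow> 'u \<Rightarrow> nat \<Rightarrow> real" where
  "actions \<zeta> u m = (cmod (\<zeta> u m))\<^sup>2"

definition finite_gap :: "('u \<Rightarrow> nat \<Rightarrow> complex) \<Rightarrow> 'u \<Rightarrow> bool" where
  "finite_gap \<zeta> u \<longleftrightarrow> (\<exists>M. \<forall>m\<ge>M. \<zeta> u m = 0)"

end

theory Submission
  imports Defs "HOL-Analysis.Analysis"
begin

lemma gamma_rep:
  assumes inj: "inj_on n {1..N}"
  shows "gamma_seq a N n k m = (\<Sum>q\<in>{1..N}. if m = n q then slope_gap N n k q / real a else 0)"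
proof (cases "\<exists>p\<in>{1..N}. n p = m")
  case True
  then obtain p where p: "p \<in> {1..N}" "n p = m" by blast
  have the: "(THE p. p \<in> {1..N} \<and> n p = m) = p"
  proof (rule the_equality)
    show "p \<in> {1..N} \<and> n p = m" using p by blast
    fix q assume "q \<in> {1..N} \<and> n q = m"
    then show "q = p" using p inj unfolding inj_on_def by metis
  qed
  have "(\<Sum>q\<in>{1..N}. if m = n q then slope_gap N n k q / real a else 0)
      = (\<Sum>q\<in>{1..N}. if q = p then slope_gap N n k q / real a else 0)"
  proof (rule sum.cong)
    fix q assume q: "q \<in> {1..N}"
    have "m = n q \<longleftrightarrow> q = p" using p q inj unfolding inj_on_def by metis
    then show "(if m = n q then slope_gap N n k q / real a else 0) = (if q = p then slope_gap N n k q / real a else 0)"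
      by simp
  qed simp
  also have "\<dots> = slope_gap N n k p / real a" using p by simp
  finally show ?thesis using True the by (simp add: gamma_seq_def)
next
  case False
  have "(\<Sum>q\<in>{1..N}. if m = n q then slope_gap N n k q / real a else 0) = 0"
    using False by (intro sum.neutral) auto
  then show ?thesis using False unfolding gamma_seq_def by simp
qed


lemma shifted_sum:
  fixes c :: "nat \<Rightarrow> real"
  assumes fin: "finite A"
  shows "(\<Sum>j. real (Suc j) * (\<Sum>q\<in>A. if d + Suc j = n q then c q else 0))
       = (\<Sum>q\<in>A. if d < n q then real (n q - d) * c q else 0)"
proof -
  have eq1: "real (Suc j) * (if d + Suc j = n q then c q else 0)
      = (if j = n q - d - 1 then (if d < n q then real (n q - d) * c q else 0) else 0)" for j q
  proof (cases "d + Suc j = n q")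
    case True
    then have "j = n q - d - 1" "d < n q" "Suc j = n q - d" by linarith+
    have l: "real (Suc j) * (if d + Suc j = n q then c q else 0) = real (n q - d) * c q"
      using True \<open>Suc j = n q - d\<close> by simp
    have r: "(if j = n q - d - 1 then (if d < n q then real (n q - d) * c q else 0) else 0) = real (n q - d) * c q"
      using \<open>j = n q - d - 1\<close> \<open>d < n q\<close> by simp
    show ?thesis using l r by simp
  next
    case False
    then have "\<not> (j = n q - d - 1 \<and> d < n q)" by linarith
    then show ?thesis using False by auto
  qed
  have eq: "real (Suc j) * (\<Sum>q\<in>A. if d + Suc j = n q then c q else 0)
      = (\<Sum>q\<in>A. if j = n q - d - 1 then (if d < n q then real (n q - d) * c q else 0) else 0)" for j
    unfolding sum_distrib_left using eq1 by (intro sum.cong) simp_all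
  have s: "(\<lambda>j. if j = n q - d - 1 then (if d < n q then real (n q - d) * c q else 0) else 0)
      sums (if d < n q then real (n q - d) * c q else 0)" for q
    using sums_single[of "n q - d - 1" "\<lambda>_. (if d < n q then real (n q - d) * c q else 0)"]
    by simp
  have "(\<Sum>j. real (Suc j) * (\<Sum>q\<in>A. if d + Suc j = n q then c q else 0))
     = (\<Sum>j. \<Sum>q\<in>A. if j = n q - d - 1 then (if d < n q then real (n q - d) * c q else 0) else 0)"
    by (simp only: eq)
  also have "\<dots> = (\<Sum>q\<in>A. \<Sum>j. if j = n q - d - 1 then (if d < n q then real (n q - d) * c q else 0) else 0)"
    by (rule suminf_sum) (use s sums_summable in blast)
  also have "\<dots> = (\<Sum>q\<in>A. if d < n q then real (n q - d) * c q else 0)"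
    using s by (intro sum.cong refl sums_unique[symmetric])
  finally show ?thesis .
qed


lemma mono_lift:
  fixes f :: "nat \<Rightarrow> nat"
  assumes "\<forall>p<N. f p < f (Suc p)" "i < j" "j \<le> N"
  shows "f i < f j"
  using assms(2,3)
proof (induction j)
  case 0 then show ?case by simp
next
  case (Suc j)
  have "f j < f (Suc j)" using assms(1) Suc.prems by simp
  then show ?case using Suc by (cases "i = j") auto
qed

definition slp :: "nat \<Rightarrow> (nat \<Rightarrow> nat) \<Rightarrow> (nat \<Rightarrow> nat) \<Rightarrow> nat \<Rightarrow> real" where
  "slp N n k q = (real (kk N k q) - real (kk N k (q - 1))) / (real (nn N n q) - real (nn N n (q - 1)))"

lemma slope_gap_slp: "slope_gap N n k q = slp N n k q - slp N n k (Suc q)"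
  unfolding slope_gap_def slp_def by simp

lemma telescope:
  assumes "p \<le> M"
  shows "(\<Sum>q\<in>{Suc p..M}. slope_gap N n k q) = slp N n k (Suc p) - slp N n k (Suc M)"
  using assms
proof (induction M)
  case 0 then show ?case by simp
next
  case (Suc M)
  show ?case
  proof (cases "p = Suc M")
    case True then show ?thesis by simp
  next
    case False
    then have "p \<le> M" using Suc.prems by simp
    then have "(\<Sum>q\<in>{Suc p..Suc M}. slope_gap N n k q) = (\<Sum>q\<in>{Suc p..M}. slope_gap N n k q) + slope_gap N n k (Suc M)"
      by simp
    then show ?thesis using Suc.IH[OF \<open>p \<le> M\<close>] by (simp add: slope_gap_slp)
  qed
qed

lemma abel:
  assumes nmono: "\<forall>p<N. nn N n p < nn N n (Suc p)" and "p \<le> N"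
  shows "(\<Sum>q\<in>{1..p}. real (nn N n q) * slope_gap N n k q) + real (nn N n p) * slp N n k (Suc p)
         = real (kk N k p)"
  using assms(2)
proof (induction p)
  case 0 then show ?case by (simp add: nn_def kk_def ext_seq_def)
next
  case (Suc p)
  have lt: "nn N n p < nn N n (Suc p)" using nmono Suc.prems by simp
  have IH: "(\<Sum>q\<in>{1..p}. real (nn N n q) * slope_gap N n k q) = real (kk N k p) - real (nn N n p) * slp N n k (Suc p)"
    using Suc by simp
  have sl: "real (nn N n (Suc p)) * slp N n k (Suc p) - real (nn N n p) * slp N n k (Suc p) = real (kk N k (Suc p)) - real (kk N k p)"
  proof -
    have ne: "real (nn N n (Suc p)) - real (nn N n p) \<noteq> 0" using lt by simp
    have "(real (nn N n (Suc p)) - real (nn N n p)) * slp N n k (Suc p) = real (kk N k (Suc p)) - real (kk N k p)"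
      unfolding slp_def using ne by simp
    then show ?thesis by (simp add: algebra_simps)
  qed
  have "(\<Sum>q\<in>{1..Suc p}. real (nn N n q) * slope_gap N n k q) = (\<Sum>q\<in>{1..p}. real (nn N n q) * slope_gap N n k q) + real (nn N n (Suc p)) * slope_gap N n k (Suc p)"
    by simp
  then show ?case using IH sl by (simp add: slope_gap_slp right_diff_distrib)
qed

lemma omega_check_cong:
  assumes "\<forall>m\<ge>1. g m = h m"
  shows "omega_check g d = omega_check h d"
  unfolding omega_check_def using assms by simp


theorem proposition3p2:
  fixes a N :: nat and n k :: "nat \<Rightarrow> nat"
    and \<zeta> :: "'u \<Rightarrow> nat \<Rightarrow> complex" and S :: "real \<Rightarrow> 'u \<Rightarrow> 'u"
  assumes a_pos: "a \<ge> 1"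
    and n_mono: "\<forall>p<N. nn N n p < nn N n (Suc p)"
    and k_mono: "\<forall>p<N. kk N k p < kk N k (Suc p)"
    and gap_pos: "\<forall>p\<in>{1..N}. slope_gap N n k p > 0"
    \<comment> \<open>known facts on the Birkhoff map (on L^2_{r,0}, modelled by the abstract type 'u)\<close>
    and zeta_inj: "\<And>u v. (\<forall>m\<ge>1. \<zeta> u m = \<zeta> v m) \<Longrightarrow> u = v"
    and zeta_h12: "\<And>u. summable (\<lambda>j. real (Suc j) * (cmod (\<zeta> u (Suc j)))\<^sup>2)"
    and zeta_flow: "\<And>u t m. m \<ge> 1 \<Longrightarrow>
        \<zeta> (S t u) m = exp (\<i> * complex_of_real (omega (actions \<zeta> u) m * t)) * \<zeta> u m"
  shows "(\<forall>p\<in>{1..N}.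
            omega_check (gamma_seq a N n k) (n p) = real (k p) / real a
          \<and> (\<exists>z::int. omega (gamma_seq a N n k) (n p) = real_of_int z / real a))
       \<and> (\<forall>u0. (\<forall>m\<ge>1. actions \<zeta> u0 m = gamma_seq a N n k m) \<longrightarrow>
            finite_gap \<zeta> u0 \<and> (\<forall>t. S (t + 2 * pi * real a) u0 = S t u0))"
proof -
  define g where "g = gamma_seq a N n k"
  define c where "c q = slope_gap N n k q / real a" for q
  have a0: "real a > 0" using a_pos by simp
  have nn_eq: "nn N n q = n q" if "q \<in> {1..N}" for q
    using that by (simp add: nn_def ext_seq_def)
  have kk_eq: "kk N k q = k q" if "q \<in> {1..N}" for q
    using that by (simp add: kk_def ext_seq_def)
  have nlt: "n i < n j" if "i \<in> {1..N}" "j \<in> {1..N}" "i < j" for i j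
    using mono_lift[OF n_mono, of i j] that nn_eq by simp
  have npos: "n q \<ge> 1" if "q \<in> {1..N}" for q
  proof -
    have "nn N n 0 < nn N n q" using mono_lift[OF n_mono, of 0 q] that by simp
    then show ?thesis using nn_eq[OF that] by (simp add: nn_def ext_seq_def)
  qed
  have inj: "inj_on n {1..N}"
  proof (rule inj_onI)
    fix x y assume xy: "x \<in> {1..N}" "y \<in> {1..N}" "n x = n y"
    show "x = y"
    proof (rule ccontr)
      assume "x \<noteq> y"
      then have "x < y \<or> y < x" by arith
      then show False using nlt xy by fastforce
    qed
  qed
  have grep: "g m = (\<Sum>q\<in>{1..N}. if m = n q then c q else 0)" for m
    unfolding g_def c_def by (rule gamma_rep[OF inj])
  have grep2: "g (d + m) = (\<Sum>q\<in>{1..N}. if d + m = n q then c q else 0)" for d m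
    by (rule grep)
  have slpN: "slp N n k (Suc N) = 0" if "N \<ge> 1"
    using that by (simp add: slp_def kk_def ext_seq_def)
  have oc: "omega_check g (n p) = real (k p) / real a" if p: "p \<in> {1..N}" for p
  proof -
    have s1a: "(\<Sum>j. real (Suc j) * g (0 + Suc j)) = (\<Sum>q\<in>{1..N}. if 0 < n q then real (n q - 0) * c q else 0)"
      unfolding grep2 by (rule shifted_sum) simp
    have s1: "(\<Sum>j. real (Suc j) * g (Suc j)) = (\<Sum>q\<in>{1..N}. real (n q) * c q)"
    proof -
      have "(\<Sum>q\<in>{1..N}. if 0 < n q then real (n q - 0) * c q else 0) = (\<Sum>q\<in>{1..N}. real (n q) * c q)"
        using npos by (intro sum.cong) fastforce+
      then show ?thesis using s1a by simp
    qed
    have s2: "(\<Sum>j. real (Suc j) * g (n p + Suc j)) = (\<Sum>q\<in>{1..N}. if n p < n q then real (n q - n p) * c q else 0)"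
      unfolding grep2 by (rule shifted_sum) simp
    have s3: "(\<Sum>q\<in>{1..N}. real (n q) * c q) - (\<Sum>q\<in>{1..N}. if n p < n q then real (n q - n p) * c q else 0)
        = (\<Sum>q\<in>{1..N}. real (nn N n (min q p)) * c q)"
      unfolding sum_subtractf[symmetric]
    proof (rule sum.cong)
      fix q assume q: "q \<in> {1..N}"
      show "real (n q) * c q - (if n p < n q then real (n q - n p) * c q else 0) = real (nn N n (min q p)) * c q"
      proof (cases "q \<le> p")
        case True
        then have "\<not> n p < n q" using nlt[OF q p] by (cases "q = p") auto
        then show ?thesis using True nn_eq[OF q] by (simp add: min_def)
      next
        case False
        then have "n p < n q" using nlt[OF p q] by simp
        then show ?thesis using False nn_eq[OF p] by (simp add: min_def of_nat_diff algebra_simps)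
      qed
    qed simp
    have split: "{1..N} = {1..p} \<union> {Suc p..N}" using p by auto
    have s4: "(\<Sum>q\<in>{1..N}. real (nn N n (min q p)) * c q)
        = (\<Sum>q\<in>{1..p}. real (nn N n q) * c q) + real (nn N n p) * (\<Sum>q\<in>{Suc p..N}. c q)"
    proof -
      have "(\<Sum>q\<in>{1..N}. real (nn N n (min q p)) * c q)
         = (\<Sum>q\<in>{1..p}. real (nn N n (min q p)) * c q) + (\<Sum>q\<in>{Suc p..N}. real (nn N n (min q p)) * c q)"
        unfolding split by (rule sum.union_disjoint) auto
      also have "(\<Sum>q\<in>{1..p}. real (nn N n (min q p)) * c q) = (\<Sum>q\<in>{1..p}. real (nn N n q) * c q)"
        by (intro sum.cong) auto
      also have "(\<Sum>q\<in>{Suc p..N}. real (nn N n (min q p)) * c q) = real (nn N n p) * (\<Sum>q\<in>{Suc p..N}. c q)"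
        unfolding sum_distrib_left by (intro sum.cong) auto
      finally show ?thesis .
    qed
    have tel: "(\<Sum>q\<in>{Suc p..N}. c q) = slp N n k (Suc p) / real a"
      using telescope[of p N N n k] slpN p unfolding c_def sum_divide_distrib[symmetric] by auto
    have ab: "(\<Sum>q\<in>{1..p}. real (nn N n q) * c q) = ((\<Sum>q\<in>{1..p}. real (nn N n q) * slope_gap N n k q)) / real a"
      unfolding c_def sum_divide_distrib by simp
    have "omega_check g (n p) = ((\<Sum>q\<in>{1..p}. real (nn N n q) * slope_gap N n k q) + real (nn N n p) * slp N n k (Suc p)) / real a"
      unfolding omega_check_def s1 s2 s3 s4 tel ab by (simp add: add_divide_distrib)
    also have "\<dots> = real (kk N k p) / real a" using abel[OF n_mono, of p k] p by simp
    finally show ?thesis using kk_eq[OF p] by simp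
  qed
  have om: "omega g (n p) = real_of_int (int a * int (n p) ^ 2 - 2 * int (k p)) / real a" if p: "p \<in> {1..N}" for p
    using oc[OF p] a0 unfolding omega_def by (simp add: field_simps)
  have part1: "\<forall>p\<in>{1..N}. omega_check g (n p) = real (k p) / real a
          \<and> (\<exists>z::int. omega g (n p) = real_of_int z / real a)"
    using oc om by blast
  have part2: "finite_gap \<zeta> u0 \<and> (\<forall>t. S (t + 2 * pi * real a) u0 = S t u0)"
    if u0: "\<forall>m\<ge>1. actions \<zeta> u0 m = g m" for u0
  proof -
    have zero: "\<zeta> u0 m = 0" if "m \<ge> 1" "g m = 0" for m
    proof -
      have "(cmod (\<zeta> u0 m))\<^sup>2 = 0" using u0 that unfolding actions_def by simp
      then show ?thesis by simp
    qed
    have supp: "\<exists>q\<in>{1..N}. m = n q" if "m \<ge> 1" "\<zeta> u0 m \<noteq> 0" for m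
    proof (rule ccontr)
      assume "\<not> ?thesis"
      then have "g m = 0" unfolding grep by (intro sum.neutral) auto
      then show False using zero that by blast
    qed
    have fg: "finite_gap \<zeta> u0"
      unfolding finite_gap_def
    proof (intro exI allI impI)
      fix m assume m: "Suc (\<Sum>q\<in>{1..N}. n q) \<le> m"
      show "\<zeta> u0 m = 0"
      proof (rule ccontr)
        assume "\<zeta> u0 m \<noteq> 0"
        moreover have "m \<ge> 1" using m by simp
        ultimately obtain q where q: "q \<in> {1..N}" "m = n q" using supp by blast
        have "n q \<le> (\<Sum>q\<in>{1..N}. n q)" using q by (intro member_le_sum) auto
        then show False using q m by simp
      qed
    qed
    have omc: "omega (actions \<zeta> u0) m = omega g m" for m
      unfolding omega_def using omega_check_cong[OF u0] by simp
    have per: "S (t + 2 * pi * real a) u0 = S t u0" for t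
    proof (rule zeta_inj, intro allI impI)
      fix m :: nat assume m: "m \<ge> 1"
      show "\<zeta> (S (t + 2 * pi * real a) u0) m = \<zeta> (S t u0) m"
      proof (cases "\<zeta> u0 m = 0")
        case True then show ?thesis using zeta_flow m by simp
      next
        case False
        then obtain q where q: "q \<in> {1..N}" "m = n q" using supp m by blast
        define z where "z = int a * int (n q) ^ 2 - 2 * int (k q)"
        have w: "omega (actions \<zeta> u0) m = real_of_int z / real a" using om[OF q(1)] q(2) omc z_def by simp
        have "\<i> * complex_of_real (omega (actions \<zeta> u0) m * (t + 2 * pi * real a))
            = \<i> * complex_of_real (omega (actions \<zeta> u0) m * t) + \<i> * (of_int z * (of_real pi * 2))"
          using a0 unfolding w by (simp add: field_simps)
        then have "exp (\<i> * complex_of_real (omega (actions \<zeta> u0) m * (t + 2 * pi * real a)))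
            = exp (\<i> * complex_of_real (omega (actions \<zeta> u0) m * t))"
          by (simp only: exp_plus_2pin)
        then show ?thesis using zeta_flow m by simp
      qed
    qed
    show ?thesis using fg per by blast
  qed
  show ?thesis using part1 part2 unfolding g_def by blast
qed

end
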